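(* Let $V$ be a finite-dimensional real vector space with a Lorentzian inner product $g$, and let $V=E_1\oplus\cdots\oplus E_r$ ($r\ge 1$) be a $g$-orthogonal direct sum of subspaces on each of which $g$ is non-degenerate, with $E_r$ Lorentzian. For $1\le\beta\le r$ let $g_\beta$ be the symmetric bilinear form $g_\beta(X,Y)=g(X_\beta,Y_\beta)$, where $X_\beta,Y_\beta$ are the $E_\beta$-components of $X,Y$. Let $p\in E_r$ be a non-zero light-like vector and $\theta=g(p,\cdot)$. Let $\bar g_1=g,\bar g_2,\dots,\bar g_{r+1}$ be linearly independent symmetric bilinear forms on $V$ of the form $$\bar g_\alpha=\sum_{\beta=1}^r C_{\beta\alpha}g_\beta+C_{r+1\,\alpha}\,\theta\otimes\theta,\qquad C_{\beta\alpha}\in\mathbb{R},$$ and assume $C_{r\alpha}=0$ for all $2\le\alpha\le r+1$. Let $2\le\alpha\le r+1$. If $C_{r+1\,\alpha}=0$, then $$\ker\bar g_\alpha=\bigoplus_{1\le\beta\le r,\ C_{\beta\alpha}=0}E_\beta\quad\text{and}\quad \ker\big(g|_{\ker\bar g_\alpha\times\ker\bar g_\alpha}\big)=0.$$ If $C_{r+1\,\alpha}\neq0$, then $$\ker\bar g_\alpha=\bigoplus_{1\le\beta\le r-1,\ C_{\beta\alpha}=0}E_\beta\ \oplus\ \{X\in E_r\mid\theta(X)=0\}\quad\text{and}\quad \ker\big(g|_{\ker\bar g_\alpha\times\ker\bar g_\alpha}\big)=\mathbb{R}p.$$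
   Context: For a symmetric bilinear form $b$ on $V$, $\ker b=\{X\in V\mid b(X,Y)=0\ \forall Y\in V\}$. For a subspace $U$, $g|_{U\times U}$ denotes the restriction of $g$ to $U$ and $\ker(g|_{U\times U})=\{X\in U\mid g(X,Y)=0\ \forall Y\in U\}$. (In the paper, $V=T_xM$ for a Lorentzian manifold and the $E_\beta$ come from its Wu decomposition; the forms $\bar g_\alpha$ are a basis of parallel symmetric bilinear forms evaluated at $x$.) *)

theory Defs
  imports "HOL-Analysis.Analysis"
begin

definition sym_form :: "('v \<Rightarrow> 'v \<Rightarrow> real) \<Rightarrow> bool" where
  "sym_form b \<longleftrightarrow> (\<forall>x y. b x y = b y x)"

definition form_ker :: "('v \<Rightarrow> 'v \<Rightarrow> real) \<Rightarrow> 'v set" where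
  "form_ker b = {X. \<forall>Y. b X Y = 0}"

definition restr_ker :: "('v \<Rightarrow> 'v \<Rightarrow> real) \<Rightarrow> 'v set \<Rightarrow> 'v set" where
  "restr_ker b U = {X \<in> U. \<forall>Y\<in>U. b X Y = 0}"

definition nondegenerate_on :: "'v::zero set \<Rightarrow> ('v \<Rightarrow> 'v \<Rightarrow> real) \<Rightarrow> bool" where
  "nondegenerate_on U b \<longleftrightarrow> restr_ker b U \<subseteq> {0}"

text \<open>Lorentzian: non-degenerate with index exactly 1 (signature (-,+,...,+)).\<close>
definition lorentzian_on :: "'v::euclidean_space set \<Rightarrow> ('v \<Rightarrow> 'v \<Rightarrow> real) \<Rightarrow> bool" where
  "lorentzian_on U b \<longleftrightarrow> subspace U \<and> nondegenerate_on U b \<and>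
     (\<exists>x\<in>U. b x x < 0) \<and>
     (\<forall>W. subspace W \<and> W \<subseteq> U \<and> (\<forall>x\<in>W. x \<noteq> 0 \<longrightarrow> b x x < 0) \<longrightarrow> dim W \<le> 1)"

definition decomp_fun :: "(nat \<Rightarrow> 'v::real_vector set) \<Rightarrow> nat \<Rightarrow> 'v \<Rightarrow> (nat \<Rightarrow> 'v) \<Rightarrow> bool" where
  "decomp_fun E r X f \<longleftrightarrow> (\<forall>\<beta>\<in>{1..r}. f \<beta> \<in> E \<beta>) \<and> (\<forall>\<beta>. \<beta> \<notin> {1..r} \<longrightarrow> f \<beta> = 0)
      \<and> X = (\<Sum>\<beta>=1..r. f \<beta>)"

definition direct_sum :: "(nat \<Rightarrow> 'v::real_vector set) \<Rightarrow> nat \<Rightarrow> bool" where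
  "direct_sum E r \<longleftrightarrow> (\<forall>\<beta>\<in>{1..r}. subspace (E \<beta>)) \<and> (\<forall>X. \<exists>!f. decomp_fun E r X f)"

definition component :: "(nat \<Rightarrow> 'v::real_vector set) \<Rightarrow> nat \<Rightarrow> nat \<Rightarrow> 'v \<Rightarrow> 'v" where
  "component E r \<beta> X = (THE f. decomp_fun E r X f) \<beta>"

definition g_part :: "('v::real_vector \<Rightarrow> 'v \<Rightarrow> real) \<Rightarrow> (nat \<Rightarrow> 'v set) \<Rightarrow> nat \<Rightarrow> nat \<Rightarrow> 'v \<Rightarrow> 'v \<Rightarrow> real" where
  "g_part g E r \<beta> X Y = g (component E r \<beta> X) (component E r \<beta> Y)"

definition gbar :: "('v::real_vector \<Rightarrow> 'v \<Rightarrow> real) \<Rightarrow> (nat \<Rightarrow> 'v set) \<Rightarrow> nat \<Rightarrow> 'v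
     \<Rightarrow> (nat \<Rightarrow> nat \<Rightarrow> real) \<Rightarrow> nat \<Rightarrow> 'v \<Rightarrow> 'v \<Rightarrow> real" where
  "gbar g E r p C \<alpha> X Y = (\<Sum>\<beta>=1..r. C \<beta> \<alpha> * g_part g E r \<beta> X Y) + C (r+1) \<alpha> * (g p X * g p Y)"

definition forms_lin_indep :: "(nat \<Rightarrow> 'v \<Rightarrow> 'v \<Rightarrow> real) \<Rightarrow> nat \<Rightarrow> bool" where
  "forms_lin_indep B n \<longleftrightarrow>
     (\<forall>c. (\<forall>X Y. (\<Sum>\<alpha>=1..n. c \<alpha> * B \<alpha> X Y) = 0) \<longrightarrow> (\<forall>\<alpha>\<in>{1..n}. c \<alpha> = 0))"

end

theory Submission
  imports Defs
begin

context fixes E :: "nat \<Rightarrow> 'v::real_vector set" and r :: nat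
  assumes ds: "direct_sum E r"
begin

lemma ds_sub: "\<beta>\<in>{1..r} \<Longrightarrow> subspace (E \<beta>)" using ds unfolding direct_sum_def by auto

lemma comp_decomp: "decomp_fun E r X (\<lambda>\<beta>. component E r \<beta> X)"
proof -
  have "\<exists>!f. decomp_fun E r X f" using ds unfolding direct_sum_def by auto
  hence "decomp_fun E r X (THE f. decomp_fun E r X f)" by (rule theI')
  thus ?thesis unfolding component_def by simp
qed

lemma comp_unique: "decomp_fun E r X f \<Longrightarrow> component E r \<beta> X = f \<beta>"
proof -
  assume a: "decomp_fun E r X f"
  have "f = (\<lambda>\<beta>. component E r \<beta> X)" using ds comp_decomp[of X] a unfolding direct_sum_def by blast
  thus ?thesis by simp
qed

lemma comp_in: "\<beta>\<in>{1..r} \<Longrightarrow> component E r \<beta> X \<in> E \<beta>"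
  using comp_decomp[of X] unfolding decomp_fun_def by blast
lemma comp_out: "\<beta>\<notin>{1..r} \<Longrightarrow> component E r \<beta> X = 0"
  using comp_decomp[of X] unfolding decomp_fun_def by blast
lemma comp_sum: "(\<Sum>\<beta>=1..r. component E r \<beta> X) = X"
  using comp_decomp[of X] unfolding decomp_fun_def by simp

lemma comp_linear: "linear (component E r \<beta>)"
proof (rule linearI)
  fix x y
  have "decomp_fun E r (x+y) (\<lambda>\<beta>. component E r \<beta> x + component E r \<beta> y)"
    unfolding decomp_fun_def
  proof (intro conjI ballI allI impI)
    fix \<beta> assume "\<beta>\<in>{1..r}" thus "component E r \<beta> x + component E r \<beta> y \<in> E \<beta>"
      by (simp add: comp_in ds_sub subspace_add)
  next
    fix \<beta> assume "\<beta>\<notin>{1..r}" thus "component E r \<beta> x + component E r \<beta> y = 0"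
      by (simp add: comp_out)
  next
    show "x + y = (\<Sum>\<beta>=1..r. component E r \<beta> x + component E r \<beta> y)"
      by (simp only: sum.distrib comp_sum)
  qed
  thus "component E r \<beta> (x+y) = component E r \<beta> x + component E r \<beta> y" by (rule comp_unique)
next
  fix c x
  have "decomp_fun E r (c *\<^sub>R x) (\<lambda>\<beta>. c *\<^sub>R component E r \<beta> x)"
    unfolding decomp_fun_def
  proof (intro conjI ballI allI impI)
    fix \<beta> assume "\<beta>\<in>{1..r}" thus "c *\<^sub>R component E r \<beta> x \<in> E \<beta>"
      by (simp add: comp_in ds_sub subspace_scale)
  next
    fix \<beta> assume "\<beta>\<notin>{1..r}" thus "c *\<^sub>R component E r \<beta> x = 0"
      by (simp add: comp_out)
  next
    show "c *\<^sub>R x = (\<Sum>\<beta>=1..r. c *\<^sub>R component E r \<beta> x)"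
      by (simp only: scaleR_sum_right[symmetric] comp_sum)
  qed
  thus "component E r \<beta> (c *\<^sub>R x) = c *\<^sub>R component E r \<beta> x" by (rule comp_unique)
qed

lemma comp_single: "\<gamma>\<in>{1..r} \<Longrightarrow> Y \<in> E \<gamma> \<Longrightarrow> component E r \<beta> Y = (if \<beta>=\<gamma> then Y else 0)"
proof -
  assume g: "\<gamma>\<in>{1..r}" and Y: "Y \<in> E \<gamma>"
  have z: "\<forall>\<beta>\<in>{1..r}. 0 \<in> E \<beta>" using ds_sub subspace_0 by blast
  have "decomp_fun E r Y (\<lambda>\<beta>. if \<beta>=\<gamma> then Y else 0)"
    unfolding decomp_fun_def using g Y z by (auto simp: sum.delta)
  thus ?thesis by (rule comp_unique)
qed

end

lemma bil_l: "bilinear g \<Longrightarrow> linear (\<lambda>x. g x y)" unfolding bilinear_def by auto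
lemma bil_r: "bilinear g \<Longrightarrow> linear (g x)" unfolding bilinear_def by auto


context
  fixes g :: "'v::real_vector \<Rightarrow> 'v \<Rightarrow> real" and E :: "nat \<Rightarrow> 'v set" and r :: nat and p :: 'v
  assumes bil: "bilinear g" and sy: "sym_form g" and ds: "direct_sum E r"
    and r_pos: "r \<ge> 1"
    and orth: "\<forall>\<beta>\<in>{1..r}. \<forall>\<gamma>\<in>{1..r}. \<beta> \<noteq> \<gamma> \<longrightarrow> (\<forall>X\<in>E \<beta>. \<forall>Y\<in>E \<gamma>. g X Y = 0)"
    and nondeg: "\<forall>\<beta>\<in>{1..r}. nondegenerate_on (E \<beta>) g"
    and p_in: "p \<in> E r" and p_nz: "p \<noteq> 0"
begin

lemma g0r: "g x 0 = 0" using linear_0[OF bil_r[OF bil]] by simp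
lemma g0l: "g 0 y = 0" using linear_0[OF bil_l[OF bil, of y]] by simp
lemma gsym: "g x y = g y x" using sy unfolding sym_form_def by auto
lemma rin: "r \<in> {1..r}" using r_pos by simp

lemma g_comp: "\<gamma>\<in>{1..r} \<Longrightarrow> Y \<in> E \<gamma> \<Longrightarrow> g X Y = g (component E r \<gamma> X) Y"
proof -
  assume g: "\<gamma>\<in>{1..r}" and Y: "Y \<in> E \<gamma>"
  have "g X Y = g (\<Sum>\<beta>\<in>{1..r}. component E r \<beta> X) Y" using comp_sum[OF ds] by simp
  also have "\<dots> = (\<Sum>\<beta>\<in>{1..r}. g (component E r \<beta> X) Y)"
    by (rule linear_sum[OF bil_l[OF bil]])
  also have "\<dots> = (\<Sum>\<beta>\<in>{1..r}. if \<beta> = \<gamma> then g (component E r \<gamma> X) Y else 0)"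
  proof (rule sum.cong)
    fix \<beta> assume b: "\<beta> \<in> {1..r}"
    show "g (component E r \<beta> X) Y = (if \<beta> = \<gamma> then g (component E r \<gamma> X) Y else 0)"
      using orth b g Y comp_in[OF ds b] by auto
  qed simp
  also have "\<dots> = g (component E r \<gamma> X) Y" using g by (simp add: sum.delta)
  finally show ?thesis .
qed

lemma theta: "g p X = g p (component E r r X)"
  using g_comp[OF rin p_in, of X] gsym by metis

lemma theta0: "\<gamma>\<in>{1..r} \<Longrightarrow> \<gamma> \<noteq> r \<Longrightarrow> Y \<in> E \<gamma> \<Longrightarrow> g p Y = 0"
  using orth rin p_in by metis

lemma exY: "\<exists>Y\<in>E r. g p Y \<noteq> 0"
proof (rule ccontr)
  assume "\<not> ?thesis"
  hence "p \<in> restr_ker g (E r)" unfolding restr_ker_def using p_in by auto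
  thus False using nondeg rin p_nz unfolding nondegenerate_on_def by blast
qed

lemma nd: "\<beta>\<in>{1..r} \<Longrightarrow> Z \<in> E \<beta> \<Longrightarrow> (\<forall>Y\<in>E \<beta>. g Z Y = 0) \<Longrightarrow> Z = 0"
  using nondeg unfolding nondegenerate_on_def restr_ker_def by blast

lemma comp_zero: "(\<forall>\<beta>\<in>{1..r}. component E r \<beta> X = 0) \<Longrightarrow> X = 0"
  using comp_sum[OF ds, of X] by (metis sum.neutral)

lemma gbar_single: "\<gamma>\<in>{1..r} \<Longrightarrow> Y \<in> E \<gamma> \<Longrightarrow>
   gbar g E r p C \<alpha> X Y = C \<gamma> \<alpha> * g (component E r \<gamma> X) Y + C (r+1) \<alpha> * (g p X * g p Y)"
proof -
  assume g: "\<gamma>\<in>{1..r}" and Y: "Y \<in> E \<gamma>"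
  have "(\<Sum>\<beta>\<in>{1..r}. C \<beta> \<alpha> * g_part g E r \<beta> X Y) =
        (\<Sum>\<beta>\<in>{1..r}. if \<beta> = \<gamma> then C \<gamma> \<alpha> * g (component E r \<gamma> X) Y else 0)"
  proof (rule sum.cong)
    fix \<beta> assume b: "\<beta> \<in> {1..r}"
    show "C \<beta> \<alpha> * g_part g E r \<beta> X Y = (if \<beta> = \<gamma> then C \<gamma> \<alpha> * g (component E r \<gamma> X) Y else 0)"
      unfolding g_part_def using comp_single[OF ds g Y] g0r by auto
  qed simp
  also have "\<dots> = C \<gamma> \<alpha> * g (component E r \<gamma> X) Y" using g by (simp add: sum.delta)
  finally show ?thesis unfolding gbar_def by simp
qed

lemma perp_p: "Z \<in> E r \<Longrightarrow> (\<forall>Y\<in>E r. g p Y = 0 \<longrightarrow> g Z Y = 0) \<Longrightarrow> \<exists>t. Z = t *\<^sub>R p"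
proof -
  assume Z: "Z \<in> E r" and h: "\<forall>Y\<in>E r. g p Y = 0 \<longrightarrow> g Z Y = 0"
  obtain Y0 where Y0: "Y0 \<in> E r" "g p Y0 \<noteq> 0" using exY by blast
  define t where "t = g Z Y0 / g p Y0"
  have sub: "subspace (E r)" using ds_sub[OF ds rin] .
  have "Z - t *\<^sub>R p = 0"
  proof (rule nd[OF rin])
    show "Z - t *\<^sub>R p \<in> E r" using sub Z p_in by (simp add: subspace_diff subspace_scale)
    show "\<forall>Y\<in>E r. g (Z - t *\<^sub>R p) Y = 0"
    proof
      fix Y assume Y: "Y \<in> E r"
      define Y' where "Y' = Y - (g p Y / g p Y0) *\<^sub>R Y0"
      have Y'in: "Y' \<in> E r" unfolding Y'_def using sub Y Y0 by (simp add: subspace_diff subspace_scale)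
      have lr: "linear (g p)" "linear (g Z)" using bil_r[OF bil] by auto
      have "g p Y' = g p Y - (g p Y / g p Y0) * g p Y0"
        unfolding Y'_def using lr by (simp add: linear_diff linear_cmul)
      hence "g p Y' = 0" using Y0 by simp
      hence "g Z Y' = 0" using h Y'in by blast
      moreover have "g Z Y' = g Z Y - (g p Y / g p Y0) * g Z Y0"
        unfolding Y'_def using lr by (simp add: linear_diff linear_cmul)
      ultimately have "g Z Y = t * g p Y" unfolding t_def by (simp add: field_simps)
      moreover have "g (Z - t *\<^sub>R p) Y = g Z Y - t * g p Y"
        using linear_diff[OF bil_l[OF bil, of Y], of Z "t *\<^sub>R p"] linear_cmul[OF bil_l[OF bil, of Y], of t p] by simp
      ultimately show "g (Z - t *\<^sub>R p) Y = 0" by simp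
    qed
  qed
  thus ?thesis by auto
qed


lemma gbar_expand: "gbar g E r p C \<alpha> X Y = (\<Sum>\<beta>\<in>{1..r}. C \<beta> \<alpha> * g (component E r \<beta> X) (component E r \<beta> Y)) + C (r+1) \<alpha> * (g p X * g p Y)"
  unfolding gbar_def g_part_def by simp

lemma case1:
  assumes Cr: "C r \<alpha> = 0" and Cc: "C (r+1) \<alpha> = 0"
  shows "form_ker (gbar g E r p C \<alpha>) = span (\<Union>\<beta>\<in>{\<beta>\<in>{1..r}. C \<beta> \<alpha> = 0}. E \<beta>)
          \<and> restr_ker g (form_ker (gbar g E r p C \<alpha>)) = {0}"
proof -
  define K where "K = {X. \<forall>\<beta>\<in>{1..r}. C \<beta> \<alpha> \<noteq> 0 \<longrightarrow> component E r \<beta> X = 0}"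
  define A where "A = (\<Union>\<beta>\<in>{\<beta>\<in>{1..r}. C \<beta> \<alpha> = 0}. E \<beta>)"
  have lc: "\<And>\<beta>. linear (component E r \<beta>)" by (rule comp_linear[OF ds])
  have Eb: "E \<gamma> \<subseteq> K" if "\<gamma>\<in>{1..r}" "C \<gamma> \<alpha> = 0" for \<gamma>
    unfolding K_def using comp_single[OF ds that(1)] that(2) by auto
  have fk: "form_ker (gbar g E r p C \<alpha>) = K"
  proof
    show "form_ker (gbar g E r p C \<alpha>) \<subseteq> K"
    proof
      fix X assume X: "X \<in> form_ker (gbar g E r p C \<alpha>)"
      show "X \<in> K" unfolding K_def
      proof (intro CollectI ballI impI)
        fix \<beta> assume b: "\<beta>\<in>{1..r}" and c: "C \<beta> \<alpha> \<noteq> 0"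
        show "component E r \<beta> X = 0"
        proof (rule nd[OF b comp_in[OF ds b]], intro ballI)
          fix Y assume Y: "Y \<in> E \<beta>"
          have "gbar g E r p C \<alpha> X Y = 0" using X unfolding form_ker_def by auto
          thus "g (component E r \<beta> X) Y = 0" using gbar_single[OF b Y, of C \<alpha> X] Cc c by simp
        qed
      qed
    qed
  next
    show "K \<subseteq> form_ker (gbar g E r p C \<alpha>)"
    proof
      fix X assume X: "X \<in> K"
      have "\<forall>Y. gbar g E r p C \<alpha> X Y = 0"
      proof
        fix Y
        have "(\<Sum>\<beta>\<in>{1..r}. C \<beta> \<alpha> * g (component E r \<beta> X) (component E r \<beta> Y)) = 0"
          using X unfolding K_def by (intro sum.neutral) (auto simp: g0l)
        thus "gbar g E r p C \<alpha> X Y = 0" unfolding gbar_expand using Cc by simp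
      qed
      thus "X \<in> form_ker (gbar g E r p C \<alpha>)" unfolding form_ker_def by simp
    qed
  qed
  have subK: "subspace K"
    unfolding subspace_def K_def using lc by (auto simp: linear_0 linear_add linear_cmul)
  have sp: "span A = K"
  proof (rule span_subspace)
    show "A \<subseteq> K" unfolding A_def using Eb by blast
    show "K \<subseteq> span A"
    proof
      fix X assume X: "X \<in> K"
      have "(\<Sum>\<beta>\<in>{1..r}. component E r \<beta> X) \<in> span A"
      proof (rule span_sum)
        fix \<beta> assume b: "\<beta> \<in> {1..r}"
        show "component E r \<beta> X \<in> span A"
        proof (cases "C \<beta> \<alpha> = 0")
          case True
          hence "component E r \<beta> X \<in> A" unfolding A_def using b comp_in[OF ds b] by blast
          thus ?thesis by (rule span_base)
        next
          case False thus ?thesis using X b unfolding K_def by (simp add: span_zero)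
        qed
      qed
      thus "X \<in> span A" using comp_sum[OF ds, of X] by simp
    qed
    show "subspace K" by (rule subK)
  qed
  have rk: "restr_ker g K = {0}"
  proof
    show "restr_ker g K \<subseteq> {0}"
    proof
      fix X assume X: "X \<in> restr_ker g K"
      have "\<forall>\<beta>\<in>{1..r}. component E r \<beta> X = 0"
      proof
        fix \<beta> assume b: "\<beta>\<in>{1..r}"
        show "component E r \<beta> X = 0"
        proof (cases "C \<beta> \<alpha> = 0")
          case True
          show ?thesis
          proof (rule nd[OF b comp_in[OF ds b]], intro ballI)
            fix Y assume Y: "Y \<in> E \<beta>"
            have "Y \<in> K" using Eb[OF b True] Y by blast
            hence "g X Y = 0" using X unfolding restr_ker_def by blast
            thus "g (component E r \<beta> X) Y = 0" using g_comp[OF b Y] by simp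
          qed
        next
          case False thus ?thesis using X b unfolding restr_ker_def K_def by simp
        qed
      qed
      thus "X \<in> {0}" using comp_zero by simp
    qed
    show "{0} \<subseteq> restr_ker g K"
      unfolding restr_ker_def K_def using lc by (simp add: linear_0 g0l)
  qed
  show ?thesis using fk sp rk unfolding A_def by simp
qed


lemma case2:
  assumes Cr: "C r \<alpha> = 0" and Cc: "C (r+1) \<alpha> \<noteq> 0" and pp: "g p p = 0"
  shows "form_ker (gbar g E r p C \<alpha>) =
              span ((\<Union>\<beta>\<in>{\<beta>\<in>{1..r-1}. C \<beta> \<alpha> = 0}. E \<beta>) \<union> {X \<in> E r. g p X = 0})
          \<and> restr_ker g (form_ker (gbar g E r p C \<alpha>)) = range (\<lambda>t. t *\<^sub>R p)"
proof -
  define K where "K = {X. (\<forall>\<beta>\<in>{1..r-1}. C \<beta> \<alpha> \<noteq> 0 \<longrightarrow> component E r \<beta> X = 0) \<and> g p X = 0}"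
  define A where "A = (\<Union>\<beta>\<in>{\<beta>\<in>{1..r-1}. C \<beta> \<alpha> = 0}. E \<beta>) \<union> {X \<in> E r. g p X = 0}"
  have lc: "\<And>\<beta>. linear (component E r \<beta>)" by (rule comp_linear[OF ds])
  have lp: "linear (g p)" using bil_r[OF bil] .
  have rng: "\<beta>\<in>{1..r-1} \<longleftrightarrow> \<beta>\<in>{1..r} \<and> \<beta> \<noteq> r" for \<beta> using r_pos by auto
  have Eb: "E \<gamma> \<subseteq> K" if "\<gamma>\<in>{1..r-1}" "C \<gamma> \<alpha> = 0" for \<gamma>
  proof
    fix Y assume Y: "Y \<in> E \<gamma>"
    have g1: "\<gamma>\<in>{1..r}" "\<gamma> \<noteq> r" using that(1) rng by auto
    show "Y \<in> K" unfolding K_def using comp_single[OF ds g1(1) Y] that(2) theta0[OF g1 Y] by auto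
  qed
  have Er: "{X \<in> E r. g p X = 0} \<subseteq> K"
    unfolding K_def using comp_single[OF ds rin] rng by auto
  have fk: "form_ker (gbar g E r p C \<alpha>) = K"
  proof
    show "form_ker (gbar g E r p C \<alpha>) \<subseteq> K"
    proof
      fix X assume X: "X \<in> form_ker (gbar g E r p C \<alpha>)"
      hence X0: "\<And>Y. gbar g E r p C \<alpha> X Y = 0" unfolding form_ker_def by auto
      have t: "g p X = 0"
      proof -
        obtain Y where Y: "Y \<in> E r" "g p Y \<noteq> 0" using exY by blast
        have "C (r+1) \<alpha> * (g p X * g p Y) = 0" using gbar_single[OF rin Y(1), of C \<alpha> X] X0 Cr by simp
        thus ?thesis using Cc Y(2) by simp
      qed
      show "X \<in> K" unfolding K_def
      proof (intro CollectI conjI ballI impI t)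
        fix \<beta> assume b0: "\<beta>\<in>{1..r-1}" and c: "C \<beta> \<alpha> \<noteq> 0"
        have b: "\<beta>\<in>{1..r}" "\<beta> \<noteq> r" using b0 rng by auto
        show "component E r \<beta> X = 0"
        proof (rule nd[OF b(1) comp_in[OF ds b(1)]], intro ballI)
          fix Y assume Y: "Y \<in> E \<beta>"
          have "g p Y = 0" by (rule theta0[OF b Y])
          thus "g (component E r \<beta> X) Y = 0" using gbar_single[OF b(1) Y, of C \<alpha> X] X0 c by simp
        qed
      qed
    qed
  next
    show "K \<subseteq> form_ker (gbar g E r p C \<alpha>)"
    proof
      fix X assume X: "X \<in> K"
      have "\<forall>Y. gbar g E r p C \<alpha> X Y = 0"
      proof
        fix Y
        have "(\<Sum>\<beta>\<in>{1..r}. C \<beta> \<alpha> * g (component E r \<beta> X) (component E r \<beta> Y)) = 0"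
        proof (rule sum.neutral, intro ballI)
          fix \<beta> assume b: "\<beta>\<in>{1..r}"
          show "C \<beta> \<alpha> * g (component E r \<beta> X) (component E r \<beta> Y) = 0"
          proof (cases "\<beta> = r")
            case True thus ?thesis using Cr by simp
          next
            case False
            hence "\<beta>\<in>{1..r-1}" using b rng by auto
            thus ?thesis using X unfolding K_def by (auto simp: g0l)
          qed
        qed
        moreover have "g p X = 0" using X unfolding K_def by simp
        ultimately show "gbar g E r p C \<alpha> X Y = 0" unfolding gbar_expand by simp
      qed
      thus "X \<in> form_ker (gbar g E r p C \<alpha>)" unfolding form_ker_def by simp
    qed
  qed
  have subK: "subspace K"
    unfolding subspace_def K_def using lc lp by (auto simp: linear_0 linear_add linear_cmul)
  have sp: "span A = K"
  proof (rule span_subspace)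
    show "A \<subseteq> K" unfolding A_def using Eb Er by blast
    show "K \<subseteq> span A"
    proof
      fix X assume X: "X \<in> K"
      have "(\<Sum>\<beta>\<in>{1..r}. component E r \<beta> X) \<in> span A"
      proof (rule span_sum)
        fix \<beta> assume b: "\<beta> \<in> {1..r}"
        show "component E r \<beta> X \<in> span A"
        proof (cases "\<beta> = r")
          case True
          have "g p (component E r r X) = 0" using theta[of X] X unfolding K_def by simp
          hence "component E r \<beta> X \<in> A" unfolding A_def using True comp_in[OF ds rin] by blast
          thus ?thesis by (rule span_base)
        next
          case False
          hence b1: "\<beta>\<in>{1..r-1}" using b rng by auto
          show ?thesis
          proof (cases "C \<beta> \<alpha> = 0")
            case True
            hence "component E r \<beta> X \<in> A" unfolding A_def using b1 comp_in[OF ds b] by blast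
            thus ?thesis by (rule span_base)
          next
            case False thus ?thesis using X b1 unfolding K_def by (simp add: span_zero)
          qed
        qed
      qed
      thus "X \<in> span A" using comp_sum[OF ds, of X] by simp
    qed
    show "subspace K" by (rule subK)
  qed
  have rk: "restr_ker g K = range (\<lambda>t. t *\<^sub>R p)"
  proof
    show "restr_ker g K \<subseteq> range (\<lambda>t. t *\<^sub>R p)"
    proof
      fix X assume X: "X \<in> restr_ker g K"
      have XK: "X \<in> K" and XY: "\<And>Y. Y \<in> K \<Longrightarrow> g X Y = 0" using X unfolding restr_ker_def by auto
      have c0: "component E r \<beta> X = 0" if b0: "\<beta>\<in>{1..r-1}" for \<beta>
      proof (cases "C \<beta> \<alpha> = 0")
        case True
        have b: "\<beta>\<in>{1..r}" using b0 rng by auto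
        show ?thesis
        proof (rule nd[OF b comp_in[OF ds b]], intro ballI)
          fix Y assume Y: "Y \<in> E \<beta>"
          have "Y \<in> K" using Eb[OF b0 True] Y by blast
          hence "g X Y = 0" by (rule XY)
          thus "g (component E r \<beta> X) Y = 0" using g_comp[OF b Y] by simp
        qed
      next
        case False thus ?thesis using XK b0 unfolding K_def by simp
      qed
      have "\<exists>t. component E r r X = t *\<^sub>R p"
      proof (rule perp_p[OF comp_in[OF ds rin]], intro ballI impI)
        fix Y assume Y: "Y \<in> E r" "g p Y = 0"
        hence "Y \<in> K" using Er by blast
        hence "g X Y = 0" by (rule XY)
        thus "g (component E r r X) Y = 0" using g_comp[OF rin Y(1)] by simp
      qed
      then obtain t where t: "component E r r X = t *\<^sub>R p" by blast
      have "X = (\<Sum>\<beta>\<in>{1..r}. component E r \<beta> X)" using comp_sum[OF ds, of X] by simp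
      also have "\<dots> = (\<Sum>\<beta>\<in>{1..r}. if \<beta> = r then component E r r X else 0)"
        by (rule sum.cong) (use c0 rng in auto)
      also have "\<dots> = t *\<^sub>R p" using rin t by (simp add: sum.delta)
      finally show "X \<in> range (\<lambda>t. t *\<^sub>R p)" by blast
    qed
    show "range (\<lambda>t. t *\<^sub>R p) \<subseteq> restr_ker g K"
    proof
      fix Z assume "Z \<in> range (\<lambda>t. t *\<^sub>R p)"
      then obtain t where Z: "Z = t *\<^sub>R p" by blast
      have tp: "t *\<^sub>R p \<in> E r" using ds_sub[OF ds rin] p_in by (simp add: subspace_scale)
      have gz: "g p Z = 0" unfolding Z using linear_cmul[OF lp, of t p] pp by simp
      have ZK: "Z \<in> K" unfolding K_def using comp_single[OF ds rin, OF tp] rng gz Z by auto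
      moreover have "\<forall>Y\<in>K. g Z Y = 0"
      proof
        fix Y assume "Y \<in> K"
        hence "g p Y = 0" unfolding K_def by simp
        thus "g Z Y = 0" unfolding Z using linear_cmul[OF bil_l[OF bil, of Y], of t p] by simp
      qed
      ultimately show "Z \<in> restr_ker g K" unfolding restr_ker_def by simp
    qed
  qed
  show ?thesis using fk sp rk unfolding A_def by simp
qed

end


theorem lemma1:
  fixes g :: "'v::euclidean_space \<Rightarrow> 'v \<Rightarrow> real"
    and E :: "nat \<Rightarrow> 'v set" and r :: nat and p :: 'v
    and C :: "nat \<Rightarrow> nat \<Rightarrow> real" and \<alpha> :: nat
  assumes g_bil: "bilinear g" and g_sym: "sym_form g"
    and g_lor: "lorentzian_on UNIV g"
    and r_pos: "r \<ge> 1"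
    and dsum: "direct_sum E r"
    and orth: "\<forall>\<beta>\<in>{1..r}. \<forall>\<gamma>\<in>{1..r}. \<beta> \<noteq> \<gamma> \<longrightarrow> (\<forall>X\<in>E \<beta>. \<forall>Y\<in>E \<gamma>. g X Y = 0)"
    and nondeg: "\<forall>\<beta>\<in>{1..r}. nondegenerate_on (E \<beta>) g"
    and Er_lor: "lorentzian_on (E r) g"
    and p_in: "p \<in> E r" and p_nz: "p \<noteq> 0" and p_null: "g p p = 0"
    and gbar1: "\<forall>X Y. gbar g E r p C 1 X Y = g X Y"
    and indep: "forms_lin_indep (gbar g E r p C) (r + 1)"
    and Cr0: "\<forall>\<alpha>'\<in>{2..r+1}. C r \<alpha>' = 0"
    and \<alpha>_range: "\<alpha> \<in> {2..r+1}"
  shows "(C (r+1) \<alpha> = 0 \<longrightarrow>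
            form_ker (gbar g E r p C \<alpha>) = span (\<Union>\<beta>\<in>{\<beta>\<in>{1..r}. C \<beta> \<alpha> = 0}. E \<beta>)
          \<and> restr_ker g (form_ker (gbar g E r p C \<alpha>)) = {0})
       \<and> (C (r+1) \<alpha> \<noteq> 0 \<longrightarrow>
            form_ker (gbar g E r p C \<alpha>) =
              span ((\<Union>\<beta>\<in>{\<beta>\<in>{1..r-1}. C \<beta> \<alpha> = 0}. E \<beta>) \<union> {X \<in> E r. g p X = 0})
          \<and> restr_ker g (form_ker (gbar g E r p C \<alpha>)) = range (\<lambda>t. t *\<^sub>R p))"
proof -
  have C: "C r \<alpha> = 0" using Cr0 \<alpha>_range by blast
  show ?thesis
    using case1[OF g_bil g_sym dsum r_pos orth nondeg p_in p_nz, of C \<alpha>, OF C]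
          case2[OF g_bil g_sym dsum r_pos orth nondeg p_in p_nz, of C \<alpha>, OF C _ p_null] by blast
qed

end
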